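(* Let $p,q$ be positive integers with $p+q$ odd. For every $n\ge1$, $|\mathcal{J}^{p,q}_n|=2^{\lceil (2^n+3n)/6\rceil}$; equivalently $|\mathcal{J}^{p,q}_n|=2^{g(n)}$ with $g(n)=\frac{2^n+3n+1}{6}$ for odd $n$ and $g(n)=\frac{2^n+3n+2}{6}$ for even $n$.
   Context: Let $p,q$ be positive integers with $p+q$ odd. $\mathbb{Z}_{2^k}$ denotes the integers modulo $2^k$ ($\mathbb{Z}_1$ trivial); as $p+q$ is odd, division by $p+q$ and $(p+q)^2$ is well defined in $\mathbb{Z}_{2^k}$. For $m\ge1$, $D_{2m}$ is the dihedral group of order $2m$, realized as pairs $(f,x)$, $f\in\mathbb{Z}_2$, $x\in\mathbb{Z}_m$, with product $(f_1,x_1)(f_2,x_2)=(f_1+f_2,x_1+(-1)^{f_1}x_2)$. Define $\Phi:D_{2m}\to D_{2m}$, $\Phi((f,x))=(f,\delta(f=1)(p+q)(p-q)-x)$, where $\delta(f=1)$ is $1$ if $f=1$ and $0$ otherwise. $\mathrm{Aut}(T_1)$ is trivial; for $k\ge1$, $\mathrm{Aut}(T_{k+1})$ is the set of triples $g=(g_f,g_L,g_R)$, $g_f\in\mathbb{Z}_2$, $g_L,g_R\in\mathrm{Aut}(T_k)$, with product $(f,A,B)(g,C,D)=(f+g,AC,BD)$ if $f=0$ and $(f+g,AD,BC)$ if $f=1$; subscripts chain ($g_{LR}=(g_L)_R$, $g_{Lf}=(g_L)_f$). Recursively: $\mathcal{J}_1=\mathrm{Aut}(T_2)$, $\psi_1=0$,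 $\Delta_1(g)=(g_f,0)$; $\mathcal{J}_2=\{g\in\mathrm{Aut}(T_3):g_L=g_R\}$, $\psi_2(g)=\delta(g_{Lf}=1)\in\mathbb{Z}_2$, $\Delta_2(g)=(g_f,\psi_2(g))$; for $n\ge3$, $\mathcal{J}_n=\{g\in\mathrm{Aut}(T_{n+1}):g_L,g_R\in\mathcal{J}_{n-1},\ \Delta_{n-1}(g_L)=\Phi(\Delta_{n-1}(g_R))\}$, with $\psi_n:\mathcal{J}_n\to\mathbb{Z}_{2^{\lfloor n/2\rfloor}}$ given by $\psi_n(g)=(\psi_{n-1}(g_L)+\psi_{n-1}(g_R))/(p+q)$ for odd $n$ and $\psi_n(g)=\big(2(\psi_{n-2}(g_{LL})+\psi_{n-2}(g_{RL}))-\delta(g_{Lf}=1)(p+q)(p-q)\big)/(p+q)^2$ for even $n$ (with $2\psi_{n-2}(\cdot)$ read in $\mathbb{Z}_{2^{n/2}}$), and $\Delta_n:\mathcal{J}_n\to D_{2^{\lfloor n/2\rfloor+1}}$ given by $\Delta_n(g)=(g_f,\psi_{n-1}(g_L)-\psi_{n-1}(g_R))$ for odd $n$ and $\Delta_n(g)=(g_f,(p+q)\psi_n(g)-2\psi_{n-1}(g_R))$ for even $n$. *)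

theory Defs
  imports Complex_Main "HOL-Number_Theory.Cong"
begin

text \<open>Elements of Aut(T_k): binary trees; a node carries the flip bit g_f
  (True = 1 in Z_2) and the two subautomorphisms g_L, g_R.\<close>
datatype aut = Lf | Nd bool aut aut

fun aF :: "aut \<Rightarrow> bool" where
  "aF Lf = False" | "aF (Nd f a b) = f"
fun aL :: "aut \<Rightarrow> aut" where
  "aL Lf = Lf" | "aL (Nd f a b) = a"
fun aR :: "aut \<Rightarrow> aut" where
  "aR Lf = Lf" | "aR (Nd f a b) = b"

text \<open>autT k = Aut(T_k) for k \<ge> 1 (autT 0 is unused).\<close>
fun autT :: "nat \<Rightarrow> aut set" where
  "autT 0 = {}"
| "autT (Suc 0) = {Lf}"
| "autT (Suc (Suc k)) =
     {Nd f a b | f a b. a \<in> autT (Suc k) \<and> b \<in> autT (Suc k)}"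

text \<open>Division by a unit a in Z_M, elements represented by 0..M-1.\<close>
definition divm :: "int \<Rightarrow> int \<Rightarrow> int \<Rightarrow> int" where
  "divm M a x = (THE y. 0 \<le> y \<and> y < M \<and> [a * y = x] (mod M))"

text \<open>psi_n with values in Z_{2^{floor(n/2)}}, represented in 0..2^{floor(n/2)}-1.\<close>
fun psi :: "int \<Rightarrow> int \<Rightarrow> nat \<Rightarrow> aut \<Rightarrow> int" where
  "psi p q 0 g = 0"
| "psi p q (Suc 0) g = 0"
| "psi p q (Suc (Suc 0)) g = (if aF (aL g) then 1 else 0)"
| "psi p q (Suc (Suc (Suc k))) g =
     (if odd (k + 3)
      then divm (2 ^ ((k + 3) div 2)) (p + q)
             (psi p q (Suc (Suc k)) (aL g) + psi p q (Suc (Suc k)) (aR g))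
      else divm (2 ^ ((k + 3) div 2)) ((p + q) ^ 2)
             (2 * (psi p q (Suc k) (aL (aL g)) + psi p q (Suc k) (aL (aR g)))
              - (if aF (aL g) then (p + q) * (p - q) else 0)))"

text \<open>Delta_n with values in D_{2^{floor(n/2)+1}} = Z_2 x Z_{2^{floor(n/2)}}.\<close>
fun Delta :: "int \<Rightarrow> int \<Rightarrow> nat \<Rightarrow> aut \<Rightarrow> bool \<times> int" where
  "Delta p q 0 g = (aF g, 0)"
| "Delta p q (Suc 0) g = (aF g, 0)"
| "Delta p q (Suc (Suc 0)) g = (aF g, psi p q 2 g)"
| "Delta p q (Suc (Suc (Suc k))) g =
     (if odd (k + 3)
      then (aF g, (psi p q (k + 2) (aL g) - psi p q (k + 2) (aR g)) mod 2 ^ ((k + 3) div 2))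
      else (aF g, ((p + q) * psi p q (k + 3) g - 2 * psi p q (k + 2) (aR g))
                    mod 2 ^ ((k + 3) div 2)))"

definition Phi :: "int \<Rightarrow> int \<Rightarrow> int \<Rightarrow> bool \<times> int \<Rightarrow> bool \<times> int" where
  "Phi p q m d = (fst d, ((if fst d then (p + q) * (p - q) else 0) - snd d) mod m)"

fun J :: "int \<Rightarrow> int \<Rightarrow> nat \<Rightarrow> aut set" where
  "J p q 0 = {}"
| "J p q (Suc 0) = autT 2"
| "J p q (Suc (Suc 0)) = {g \<in> autT 3. aL g = aR g}"
| "J p q (Suc (Suc (Suc k))) =
     {g \<in> autT (k + 4). aL g \<in> J p q (k + 2) \<and> aR g \<in> J p q (k + 2) \<and>
        Delta p q (k + 2) (aL g) = Phi p q (2 ^ ((k + 2) div 2)) (Delta p q (k + 2) (aR g))}"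

end

theory Submission
  imports Defs
begin

lemma coprime_odd_pow2: "odd (a::int) \<Longrightarrow> coprime a (2^k)"
  by (simp add: coprime_commute)

lemma divm_ex:
  fixes a x :: int assumes "odd a"
  shows "\<exists>!y. 0 \<le> y \<and> y < 2^k \<and> [a * y = x] (mod 2^k)"
proof -
  have cp: "coprime a (2^k)" using assms by simp
  obtain i where i: "[a * i = 1] (mod 2^k)" using cong_solve_coprime_int[OF cp] by blast
  define y where "y = (i * x) mod 2^k"
  have "[a * y = a * (i * x)] (mod 2^k)" unfolding y_def
    by (simp add: cong_def mod_mult_right_eq)
  moreover have "[a * (i * x) = 1 * x] (mod 2^k)"
    using cong_scalar_right[OF i, of x] by (simp add: ac_simps)
  ultimately have "[a * y = x] (mod 2^k)" using cong_trans by simp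
  moreover have "0 \<le> y" "y < 2^k" unfolding y_def by auto
  moreover have "z = y" if "0 \<le> z" "z < 2^k" "[a * z = x] (mod 2^k)" for z
  proof -
    have "[a * z = a * y] (mod 2^k)" using that(3) \<open>[a * y = x] (mod 2^k)\<close>
      by (metis cong_sym cong_trans)
    then have "[z = y] (mod 2^k)" using cong_mult_lcancel[OF cp] by simp
    then show ?thesis using cong_less_imp_eq_int that \<open>0 \<le> y\<close> \<open>y < 2^k\<close> by blast
  qed
  ultimately show ?thesis by blast
qed

lemma divm_props:
  fixes a x :: int assumes "odd a"
  shows "0 \<le> divm (2^k) a x \<and> divm (2^k) a x < 2^k \<and> [a * divm (2^k) a x = x] (mod 2^k)"
  unfolding divm_def using theI'[OF divm_ex[OF assms]] .

lemma divm_unique: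
  fixes a x :: int assumes "odd a" "0 \<le> y" "y < 2^k" "[a * y = x] (mod 2^k)"
  shows "divm (2^k) a x = y"
  unfolding divm_def using divm_ex[OF assms(1)] assms(2-4) by (simp add: the1_equality)

lemma divm_eq_iff:
  fixes a x :: int assumes "odd a" "0 \<le> y" "y < 2^k"
  shows "divm (2^k) a x = y \<longleftrightarrow> (2^k) dvd (a * y - x)"
  using divm_props[OF assms(1), of k x] divm_unique[OF assms] by (auto simp: cong_iff_dvd_diff)

lemma divm_cong:
  assumes "(2::int)^k dvd (X - X')" shows "divm (2^k) c X = divm (2^k) c X'"
proof -
  have "[c * y = X] (mod 2^k) \<longleftrightarrow> [c * y = X'] (mod 2^k)" for y
    using assms by (metis cong_iff_dvd_diff cong_sym cong_trans)
  then show ?thesis unfolding divm_def by simp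
qed

lemma odd_sq: "odd (s::int) \<Longrightarrow> odd (s^2)" by simp

lemma psi_odd:
  assumes "n \<ge> 3" "odd n"
  shows "psi p q n g = divm (2^(n div 2)) (p+q) (psi p q (n-1) (aL g) + psi p q (n-1) (aR g))"
proof -
  obtain k where k: "n = Suc (Suc (Suc k))" using assms(1)
    by (metis add.commute add_Suc le_Suc_ex numeral_3_eq_3)
  have e: "Suc (Suc (Suc k)) = n" "k + 3 = n" "Suc (Suc k) = n - 1" "Suc k = n - 2" using k by auto
  note h = psi.simps(4)[of p q k g, unfolded e(1), unfolded e(2,3)]
  show ?thesis using h assms(2) by simp
qed

lemma psi_even:
  assumes "n \<ge> 3" "even n"
  shows "psi p q n g = divm (2^(n div 2)) ((p+q)^2)
     (2 * (psi p q (n-2) (aL (aL g)) + psi p q (n-2) (aL (aR g)))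
      - (if aF (aL g) then (p + q) * (p - q) else 0))"
proof -
  obtain k where k: "n = Suc (Suc (Suc k))" using assms(1)
    by (metis add.commute add_Suc le_Suc_ex numeral_3_eq_3)
  have e: "Suc (Suc (Suc k)) = n" "k + 3 = n" "Suc (Suc k) = n - 1" "Suc k = n - 2" using k by auto
  note h = psi.simps(4)[of p q k g, unfolded e(1), unfolded e(2-4)]
  show ?thesis using h assms(2) by simp
qed

lemma psi_range:
  assumes "odd (p+q)"
  shows "0 \<le> psi p q n g \<and> psi p q n g < 2^(n div 2)"
proof -
  consider "n = 0" | "n = 1" | "n = 2" | "n \<ge> 3 \<and> odd n" | "n \<ge> 3 \<and> even n"
    by linarith
  then show ?thesis
  proof cases
    case 4
    then show ?thesis using divm_props[OF assms] psi_odd by metis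
  next
    case 5
    then show ?thesis using divm_props[OF odd_sq[OF assms]] psi_even by metis
  qed (auto simp: numeral_2_eq_2)
qed

lemma Delta_ge3:
  assumes "n \<ge> 3"
  shows "Delta p q n g = (if odd n
      then (aF g, (psi p q (n-1) (aL g) - psi p q (n-1) (aR g)) mod 2 ^ (n div 2))
      else (aF g, ((p + q) * psi p q n g - 2 * psi p q (n-1) (aR g)) mod 2 ^ (n div 2)))"
proof -
  obtain k where k: "n = Suc (Suc (Suc k))" using assms(1)
    by (metis add.commute add_Suc le_Suc_ex numeral_3_eq_3)
  have e: "Suc (Suc (Suc k)) = n" "k + 3 = n" "k + 2 = n - 1" using k by auto
  note h = Delta.simps(4)[of p q k g, unfolded e(1), unfolded e(2,3)]
  show ?thesis using h by simp
qed

lemma psi_odd_dvd: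
  assumes "odd (p+q)" "n \<ge> 3" "odd n"
  shows "(2::int)^(n div 2) dvd ((p+q) * psi p q n g - (psi p q (n-1) (aL g) + psi p q (n-1) (aR g)))"
  using divm_props[OF assms(1)] psi_odd[OF assms(2,3)] by (simp add: cong_iff_dvd_diff)

lemma Delta_eq:
  assumes "odd (p+q)" "n \<ge> 2"
  shows "Delta p q n g = (aF g, ((p + q) * psi p q n g - 2 * psi p q (n-1) (aR g)) mod 2 ^ (n div 2))"
proof -
  consider "n = 2" | "n \<ge> 3 \<and> odd n" | "n \<ge> 3 \<and> even n" using assms(2) by linarith
  then show ?thesis
  proof cases
    case 1
    have r: "0 \<le> psi p q 2 g" "psi p q 2 g < 2" using psi_range[OF assms(1), of 2 g] by auto
    have "((p+q) * psi p q 2 g) mod 2 = psi p q 2 g"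
    proof (cases "psi p q 2 g = 0")
      case False
      then have "psi p q 2 g = 1" using r by linarith
      moreover have "(p+q) mod 2 = 1" using assms(1) by (metis odd_iff_mod_2_eq_one)
      ultimately show ?thesis by simp
    qed simp
    then show ?thesis using 1 by (simp add: numeral_2_eq_2)
  next
    case 2
    then have d: "(2::int)^(n div 2) dvd ((p+q) * psi p q n g - (psi p q (n-1) (aL g) + psi p q (n-1) (aR g)))"
      using psi_odd_dvd[OF assms(1)] by blast
    have "(psi p q (n-1) (aL g) - psi p q (n-1) (aR g)) mod 2 ^ (n div 2)
        = ((p + q) * psi p q n g - 2 * psi p q (n-1) (aR g)) mod 2 ^ (n div 2)"
      unfolding mod_eq_dvd_iff using dvd_minus_iff d
      by (smt (verit, ccfv_threshold) dvd_minus_iff)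
    then show ?thesis using Delta_ge3[of n] 2 by simp
  next
    case 3
    then show ?thesis using Delta_ge3[of n] by simp
  qed
qed

definition Tm :: "int \<Rightarrow> int \<Rightarrow> nat \<Rightarrow> aut \<Rightarrow> bool \<times> int \<times> int" where
  "Tm p q n g = (aF g, psi p q n g, psi p q (n-1) (aR g))"

definition Psi :: "int \<Rightarrow> int \<Rightarrow> nat \<Rightarrow> bool \<times> int \<times> int \<Rightarrow> bool \<times> int \<times> int \<Rightarrow> int" where
  "Psi p q n u v = (if even n then divm (2^(Suc n div 2)) (p+q) (fst (snd u) + fst (snd v))
     else divm (2^(Suc n div 2)) ((p+q)^2)
       (2 * ((p+q) * fst (snd u) - snd (snd u) + ((p+q) * fst (snd v) - snd (snd v)))
        - (if fst u then (p+q)*(p-q) else 0)))"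

lemma psi_Nd:
  assumes "odd (p+q)" "n \<ge> 2"
  shows "psi p q (Suc n) (Nd f a b) = Psi p q n (Tm p q n a) (Tm p q n b)"
proof (cases "even n")
  case True
  then show ?thesis using psi_odd[of "Suc n" p q "Nd f a b"] assms(2)
    by (simp add: Psi_def Tm_def)
next
  case False
  then have n3: "n \<ge> 3" using assms(2) by presburger
  have ev: "Suc n div 2 = Suc (n div 2)" using False by presburger
  have da: "(2::int)^(n div 2) dvd ((p+q) * psi p q n a - (psi p q (n-1) (aL a) + psi p q (n-1) (aR a)))"
    using psi_odd_dvd[OF assms(1) n3 False] .
  have db: "(2::int)^(n div 2) dvd ((p+q) * psi p q n b - (psi p q (n-1) (aL b) + psi p q (n-1) (aR b)))"
    using psi_odd_dvd[OF assms(1) n3 False] .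
  let ?X = "2 * (psi p q (n-1) (aL a) + psi p q (n-1) (aL b)) - (if aF a then (p + q) * (p - q) else 0)"
  let ?Y = "2 * ((p+q) * psi p q n a - psi p q (n-1) (aR a) + ((p+q) * psi p q n b - psi p q (n-1) (aR b)))
        - (if aF a then (p+q)*(p-q) else 0)"
  have "?X - ?Y = 2 * (- ((p+q) * psi p q n a - (psi p q (n-1) (aL a) + psi p q (n-1) (aR a)))
         - ((p+q) * psi p q n b - (psi p q (n-1) (aL b) + psi p q (n-1) (aR b))))"
    by (simp add: algebra_simps)
  moreover have "(2::int)^(Suc n div 2) dvd 2 * (- ((p+q) * psi p q n a - (psi p q (n-1) (aL a) + psi p q (n-1) (aR a)))
         - ((p+q) * psi p q n b - (psi p q (n-1) (aL b) + psi p q (n-1) (aR b))))"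
    unfolding ev power_Suc by (rule mult_dvd_mono[OF dvd_refl dvd_diff[OF dvd_minus_iff[THEN iffD2, OF da] db]])
  ultimately have "divm (2^(Suc n div 2)) ((p+q)^2) ?X = divm (2^(Suc n div 2)) ((p+q)^2) ?Y"
    using divm_cong by metis
  moreover have "psi p q (Suc n) (Nd f a b) = divm (2^(Suc n div 2)) ((p+q)^2) ?X"
    using psi_even[of "Suc n" p q "Nd f a b"] n3 False by simp
  ultimately show ?thesis using False by (simp add: Psi_def Tm_def)
qed

lemma autT_SS: "autT (Suc (Suc k)) = (\<lambda>(f,a,b). Nd f a b) ` (UNIV \<times> autT (Suc k) \<times> autT (Suc k))"
  by force

lemma autT_finite: "finite (autT n)"
proof (induction n rule: autT.induct)
  case (3 k)
  then show ?case unfolding autT_SS by simp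
qed auto

lemma J_sub: "n \<ge> 1 \<Longrightarrow> J p q n \<subseteq> autT (Suc n)"
proof -
  assume "n \<ge> 1"
  then consider "n = 1" | "n = 2" | k where "n = Suc (Suc (Suc k))"
    by (metis One_nat_def Suc_1 Suc_le_D not0_implies_Suc)
  then show ?thesis
  proof cases
    case 3
    then show ?thesis by (auto simp: numeral_eq_Suc)
  qed (auto simp: numeral_2_eq_2 numeral_3_eq_3 simp del: autT.simps)
qed

lemma J_finite: "finite (J p q n)"
  by (cases "n = 0") (auto intro: finite_subset[OF J_sub autT_finite])

lemma J_Suc:
  assumes "n \<ge> 2"
  shows "J p q (Suc n) = {g \<in> autT (Suc (Suc n)). aL g \<in> J p q n \<and> aR g \<in> J p q n \<and>
        Delta p q n (aL g) = Phi p q (2 ^ (n div 2)) (Delta p q n (aR g))}"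
proof -
  obtain k where k: "n = Suc (Suc k)" using assms by (metis add_2_eq_Suc le_Suc_ex)
  have e: "Suc (Suc (Suc k)) = Suc n" "k + 4 = Suc (Suc n)" "k + 2 = n" using k by auto
  show ?thesis using J.simps(4)[of p q k, unfolded e] by simp
qed

definition Dl :: "int \<Rightarrow> int \<Rightarrow> nat \<Rightarrow> bool \<times> int \<times> int \<Rightarrow> bool \<times> int" where
  "Dl p q n u = (fst u, ((p+q) * fst (snd u) - 2 * snd (snd u)) mod 2 ^ (n div 2))"

definition Q :: "int \<Rightarrow> int \<Rightarrow> nat \<Rightarrow> int \<Rightarrow> int \<Rightarrow> bool \<times> int \<times> int \<Rightarrow> bool \<times> int \<times> int \<Rightarrow> bool" where
  "Q p q n x y u v = (fst (snd v) = y \<and> Dl p q n u = Phi p q (2 ^ (n div 2)) (Dl p q n v) \<and> Psi p q n u v = x)"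

lemma Delta_Dl: "odd (p+q) \<Longrightarrow> n \<ge> 2 \<Longrightarrow> Delta p q n g = Dl p q n (Tm p q n g)"
  using Delta_eq by (simp add: Dl_def Tm_def)

lemma fiber_Suc:
  assumes "odd (p+q)" "n \<ge> 2"
  shows "{g \<in> J p q (Suc n). Tm p q (Suc n) g = (f,x,y)} =
     (\<lambda>(a,b). Nd f a b) ` {(a,b) \<in> J p q n \<times> J p q n. Q p q n x y (Tm p q n a) (Tm p q n b)}"
proof -
  have tm: "Tm p q (Suc n) (Nd f' a b) = (f', Psi p q n (Tm p q n a) (Tm p q n b), fst (snd (Tm p q n b)))"
    for f' a b using psi_Nd[OF assms] by (simp add: Tm_def)
  have sub: "J p q n \<subseteq> autT (Suc n)" using J_sub assms(2) by simp
  show ?thesis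
  proof (rule set_eqI, rule iffI)
    fix g assume g: "g \<in> {g \<in> J p q (Suc n). Tm p q (Suc n) g = (f,x,y)}"
    then have gJ: "g \<in> J p q (Suc n)" by simp
    then have "g \<in> autT (Suc (Suc n))" using J_Suc[OF assms(2)] by simp
    then obtain f' a b where gd: "g = Nd f' a b" by auto
    show "g \<in> (\<lambda>(a,b). Nd f a b) ` {(a,b) \<in> J p q n \<times> J p q n. Q p q n x y (Tm p q n a) (Tm p q n b)}"
      using g gJ unfolding gd J_Suc[OF assms(2)]
      by (auto simp: Q_def Delta_Dl[OF assms] tm image_iff)
  next
    fix g assume "g \<in> (\<lambda>(a,b). Nd f a b) ` {(a,b) \<in> J p q n \<times> J p q n. Q p q n x y (Tm p q n a) (Tm p q n b)}"
    then obtain a b where gd: "g = Nd f a b" and ab: "a \<in> J p q n" "b \<in> J p q n"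
       "Q p q n x y (Tm p q n a) (Tm p q n b)" by auto
    have "a \<in> autT (Suc n)" "b \<in> autT (Suc n)" using ab sub by auto
    then show "g \<in> {g \<in> J p q (Suc n). Tm p q (Suc n) g = (f,x,y)}"
      unfolding gd J_Suc[OF assms(2)] using ab tm
      by (auto simp: Q_def Delta_Dl[OF assms])
  qed
qed

lemma card_fiber_Suc:
  assumes "odd (p+q)" "n \<ge> 2"
  shows "card {g \<in> J p q (Suc n). Tm p q (Suc n) g = (f,x,y)} =
     card {(a,b) \<in> J p q n \<times> J p q n. Q p q n x y (Tm p q n a) (Tm p q n b)}"
  unfolding fiber_Suc[OF assms]
  by (rule card_image) (auto simp: inj_on_def)

lemma card_pairs:
  assumes fA: "finite A" and fB: "finite B" and TB: "T ` A \<subseteq> B"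
    and c: "\<And>t. t \<in> B \<Longrightarrow> card {a \<in> A. T a = t} = c"
  shows "card {(a,b) \<in> A \<times> A. R (T a) (T b)} = c * c * card {(u,v) \<in> B \<times> B. R u v}"
proof -
  let ?S = "{(u,v) \<in> B \<times> B. R u v}"
  have eq: "{(a,b) \<in> A \<times> A. R (T a) (T b)} = (\<Union>w\<in>?S. {a \<in> A. T a = fst w} \<times> {b \<in> A. T b = snd w})"
    using TB by (auto simp: image_subset_iff)
  have fS: "finite ?S" using fB by (auto intro: finite_subset[of _ "B \<times> B"])
  have "card (\<Union>w\<in>?S. {a \<in> A. T a = fst w} \<times> {b \<in> A. T b = snd w})
      = (\<Sum>w\<in>?S. card ({a \<in> A. T a = fst w} \<times> {b \<in> A. T b = snd w}))"
    by (rule card_UN_disjoint[OF fS]) (use fA in auto)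
  also have "\<dots> = (\<Sum>w\<in>?S. c * c)"
    by (rule sum.cong) (auto simp: card_cartesian_product c)
  finally show ?thesis unfolding eq by simp
qed

lemma card_total:
  assumes fA: "finite A" and fB: "finite B" and TB: "T ` A \<subseteq> B"
    and c: "\<And>t. t \<in> B \<Longrightarrow> card {a \<in> A. T a = t} = c"
  shows "card A = c * card B"
proof -
  have eq: "A = (\<Union>t\<in>B. {a \<in> A. T a = t})" using TB by auto
  have "card (\<Union>t\<in>B. {a \<in> A. T a = t}) = (\<Sum>t\<in>B. card {a \<in> A. T a = t})"
    by (rule card_UN_disjoint[OF fB]) (use fA in auto)
  also have "\<dots> = (\<Sum>t\<in>B. c)" by (rule sum.cong) (auto simp: c)
  finally show ?thesis using eq by simp
qed

lemma mod_eq_of_dvd: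
  fixes a b M :: int
  assumes "0 \<le> a" "a < M" "M dvd (b - a)"
  shows "a = b mod M"
proof -
  have "b mod M = a mod M" using assms(3) by (simp add: mod_eq_dvd_iff)
  then show ?thesis using assms(1,2) by simp
qed

lemma mod_repr: "(a::int) mod M = a - M * (a div M)"
  using minus_mod_eq_mult_div[of a M] by simp

lemma count_even:
  fixes s \<sigma> x y K :: int
  assumes s: "odd s" and sg: "odd \<sigma>" and K: "K > 0" and x: "0 \<le> x" "x < 2*K"
    and y: "0 \<le> y" "y < 2*K"
  shows "{((fa,xa,ya),(fb,xb,yb)). 0 \<le> xa \<and> xa < 2*K \<and> 0 \<le> ya \<and> ya < K \<and> 0 \<le> xb \<and> xb < 2*K
      \<and> 0 \<le> yb \<and> yb < K \<and> xb = y \<and> fa = fb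
      \<and> (2*K) dvd (s*xa - 2*ya - ((if fa then \<sigma> else 0) - s*xb + 2*yb))
      \<and> (2*K) dvd (s*x - (xa + xb))}
   = (\<lambda>ya. ((odd x, (s*x - y) mod (2*K), ya),
        (odd x, y, ((s^2*x - (if odd x then \<sigma> else 0)) div 2 - ya) mod K))) ` {0..<K}"
  (is "?L = ?h ` _")
proof (rule set_eqI, rule iffI)
  define c where "c = (s^2*x - (if odd x then \<sigma> else 0)) div 2"
  have ev: "even (s^2*x - (if odd x then \<sigma> else 0))" using s sg by auto
  then have c2: "2 * c = s^2*x - (if odd x then \<sigma> else 0)" unfolding c_def by simp
  {
    fix w assume "w \<in> ?L"
    then obtain fa xa ya yb where w: "w = ((fa,xa,ya),(fa,y,yb))"
      and r: "0 \<le> xa" "xa < 2*K" "0 \<le> ya" "ya < K" "0 \<le> yb" "yb < K"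
      and d1: "(2*K) dvd (s*xa - 2*ya - ((if fa then \<sigma> else 0) - s*y + 2*yb))"
      and d2: "(2*K) dvd (s*x - (xa + y))" by auto
    have e1: "xa = (s*x - y) mod (2*K)"
      by (rule mod_eq_of_dvd) (use r d2 in \<open>auto simp: algebra_simps\<close>)
    have eqn: "s*xa - 2*ya - ((if fa then \<sigma> else 0) - s*y + 2*yb) + s * (s*x - (xa + y))
       = s^2*x - (if fa then \<sigma> else 0) - 2*(ya+yb)"
      by (simp add: algebra_simps power2_eq_square)
    have dv: "(2*K) dvd (s*xa - 2*ya - ((if fa then \<sigma> else 0) - s*y + 2*yb) + s * (s*x - (xa + y)))"
      using d1 d2 by simp
    have d3: "(2*K) dvd (s^2*x - (if fa then \<sigma> else 0) - 2*(ya+yb))" using dv unfolding eqn .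
    then have "2 dvd (s^2*x - (if fa then \<sigma> else 0) - 2*(ya+yb))"
      using dvd_mult_left by blast
    then have fa: "fa = odd x" using s sg by (cases fa) auto
    have "s^2*x - (if fa then \<sigma> else 0) - 2*(ya+yb) = 2 * (c - (ya + yb))"
      using c2 fa by (simp add: algebra_simps)
    then have "(2*K) dvd (2 * (c - (ya + yb)))" using d3 by metis
    then have "K dvd (c - (ya + yb))" by (metis mult_dvd_mono dvd_mult_cancel_left zero_neq_numeral)
    then have e2: "yb = (c - ya) mod K"
      by (intro mod_eq_of_dvd) (use r in \<open>auto simp: algebra_simps\<close>)
    have "w = ?h ya" unfolding w e1 e2 fa c_def by simp
    then show "w \<in> ?h ` {0..<K}" using r by auto
  }
  {
    fix w assume "w \<in> ?h ` {0..<K}"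
    then obtain ya where w: "w = ?h ya" and ya: "0 \<le> ya" "ya < K" by auto
    define xa where "xa = (s*x - y) mod (2*K)"
    define yb where "yb = (c - ya) mod K"
    define t1 where "t1 = (s*x - y) div (2*K)"
    define t2 where "t2 = (c - ya) div K"
    have xa: "xa = s*x - y - 2*K*t1" unfolding xa_def t1_def by (rule mod_repr)
    have yb: "yb = c - ya - K*t2" unfolding yb_def t2_def by (rule mod_repr)
    have r: "0 \<le> xa" "xa < 2*K" "0 \<le> yb" "yb < K" unfolding xa_def yb_def using K by auto
    have d2: "(2*K) dvd (s*x - (xa + y))" unfolding xa by simp
    have "s*xa - 2*ya - ((if odd x then \<sigma> else 0) - s*y + 2*yb) = (2*K) * (t2 - s*t1)"
      unfolding xa yb using c2 by (simp add: algebra_simps power2_eq_square)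
    then have d1: "(2*K) dvd (s*xa - 2*ya - ((if odd x then \<sigma> else 0) - s*y + 2*yb))" by simp
    have "w = ((odd x, xa, ya), (odd x, y, yb))" unfolding w xa_def yb_def c_def by simp
    then show "w \<in> ?L" using r ya d1 d2 y by auto
  }
qed

lemma count_odd:
  fixes s \<sigma> x y M i :: int
  assumes s: "odd s" and sg: "odd \<sigma>" and M: "M > 0" "even M" and x: "0 \<le> x" "x < 2*M"
    and y: "0 \<le> y" "y < M" and inv: "M dvd (s*i - 1)"
  shows "{((fa,xa,ya),(fb,xb,yb)). 0 \<le> xa \<and> xa < M \<and> 0 \<le> ya \<and> ya < M \<and> 0 \<le> xb \<and> xb < M
      \<and> 0 \<le> yb \<and> yb < M \<and> xb = y \<and> fa = fb
      \<and> M dvd (s*xa - 2*ya - ((if fa then \<sigma> else 0) - s*xb + 2*yb))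
      \<and> (2*M) dvd (s^2*x - (2*(s*xa - ya + (s*xb - yb)) - (if fa then \<sigma> else 0)))}
   = (\<lambda>ya. ((odd x, (i * ((s^2*x + (if odd x then \<sigma> else 0)) div 2
                 + ((s^2*x + (if odd x then \<sigma> else 0)) div 2 - (if odd x then \<sigma> else 0))) - y) mod M, ya),
        (odd x, y, ((s^2*x + (if odd x then \<sigma> else 0)) div 2 - (if odd x then \<sigma> else 0) - ya) mod M))) ` {0..<M}"
  (is "?L = ?h ` _")
proof (rule set_eqI, rule iffI)
  define R where "R = (s^2*x + (if odd x then \<sigma> else 0)) div 2"
  define z0 where "z0 = R - (if odd x then \<sigma> else 0)"
  have ev: "even (s^2*x + (if odd x then \<sigma> else 0))" using s sg by auto
  then have R2: "2 * R = s^2*x + (if odd x then \<sigma> else 0)" unfolding R_def by simp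
  obtain t3 where t3: "s * i = 1 + M * t3" using inv by (metis dvd_def diff_eq_eq add.commute)
  {
    fix w assume "w \<in> ?L"
    then obtain fa xa ya yb where w: "w = ((fa,xa,ya),(fa,y,yb))"
      and r: "0 \<le> xa" "xa < M" "0 \<le> ya" "ya < M" "0 \<le> yb" "yb < M"
      and d1: "M dvd (s*xa - 2*ya - ((if fa then \<sigma> else 0) - s*y + 2*yb))"
      and d2: "(2*M) dvd (s^2*x - (2*(s*xa - ya + (s*y - yb)) - (if fa then \<sigma> else 0)))" by auto
    have "2 dvd (s^2*x - (2*(s*xa - ya + (s*y - yb)) - (if fa then \<sigma> else 0)))"
      using d2 dvd_mult_left by blast
    then have fa: "fa = odd x" using s sg by (cases fa) auto
    have eqn: "s^2*x - (2*(s*xa - ya + (s*y - yb)) - (if fa then \<sigma> else 0))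
        = 2 * (R - (s*xa + s*y) + (ya + yb))"
      using R2 fa by (simp add: algebra_simps)
    have "(2*M) dvd (2 * (R - (s*xa + s*y) + (ya + yb)))" using d2 unfolding eqn .
    then have d3: "M dvd (R - (s*xa + s*y) + (ya + yb))"
      by (metis dvd_mult_cancel_left zero_neq_numeral)
    have "M dvd ((R - (s*xa + s*y) + (ya + yb)) + (s*xa - 2*ya - ((if fa then \<sigma> else 0) - s*y + 2*yb)))"
      using d1 d3 by (rule dvd_add[rotated])
    moreover have "(R - (s*xa + s*y) + (ya + yb)) + (s*xa - 2*ya - ((if fa then \<sigma> else 0) - s*y + 2*yb))
       = z0 - (ya + yb)" unfolding z0_def using fa by (simp add: algebra_simps)
    ultimately have d4: "M dvd (z0 - (ya + yb))" by metis
    then have e2: "yb = (z0 - ya) mod M"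
      by (intro mod_eq_of_dvd) (use r in \<open>auto simp: algebra_simps\<close>)
    have "M dvd (i * ((R - (s*xa + s*y) + (ya + yb)) + (z0 - (ya + yb))) + (xa + y) * (s * i - 1))"
      by (rule dvd_add[OF dvd_mult[OF dvd_add[OF d3 d4]] dvd_mult[OF inv]])
    moreover have "i * ((R - (s*xa + s*y) + (ya + yb)) + (z0 - (ya + yb))) + (xa + y) * (s * i - 1)
        = i * (R + z0) - y - xa" by (simp add: algebra_simps)
    ultimately have "M dvd (i * (R + z0) - y - xa)" by metis
    then have e1: "xa = (i * (R + z0) - y) mod M"
      by (intro mod_eq_of_dvd) (use r in \<open>auto simp: algebra_simps\<close>)
    have "w = ?h ya" unfolding w e1 e2 fa z0_def R_def by simp
    then show "w \<in> ?h ` {0..<M}" using r by auto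
  }
  {
    fix w assume "w \<in> ?h ` {0..<M}"
    then obtain ya where w: "w = ?h ya" and ya: "0 \<le> ya" "ya < M" by auto
    define xa where "xa = (i * (R + z0) - y) mod M"
    define yb where "yb = (z0 - ya) mod M"
    define t1 where "t1 = (i * (R + z0) - y) div M"
    define t2 where "t2 = (z0 - ya) div M"
    have xa: "xa = i * (R + z0) - y - M*t1" unfolding xa_def t1_def by (rule mod_repr)
    have yb: "yb = z0 - ya - M*t2" unfolding yb_def t2_def by (rule mod_repr)
    have r: "0 \<le> xa" "xa < M" "0 \<le> yb" "yb < M" unfolding xa_def yb_def using M by auto
    have "s*xa - 2*ya - ((if odd x then \<sigma> else 0) - s*y + 2*yb)
        = (s*i) * (R + z0) - s*M*t1 - (if odd x then \<sigma> else 0) - 2*z0 + 2*M*t2"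
      unfolding xa yb by (simp add: algebra_simps)
    also have "\<dots> = M * (t3 * (R + z0) - s*t1 + 2*t2)"
      unfolding t3 z0_def by (simp add: algebra_simps)
    finally have d1: "M dvd (s*xa - 2*ya - ((if odd x then \<sigma> else 0) - s*y + 2*yb))" by simp
    have "s^2*x - (2*(s*xa - ya + (s*y - yb)) - (if odd x then \<sigma> else 0))
        = 2*R - 2*((s*i) * (R + z0) - s*M*t1 - z0 + M*t2)"
      unfolding xa yb using R2 by (simp add: algebra_simps)
    also have "\<dots> = (2*M) * (- (t3 * (R + z0) - s*t1 + t2))"
      unfolding t3 by (simp add: algebra_simps)
    finally have d2: "(2*M) dvd (s^2*x - (2*(s*xa - ya + (s*y - yb)) - (if odd x then \<sigma> else 0)))"
      by (metis dvd_triv_left)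
    have "w = ((odd x, xa, ya), (odd x, y, yb))" unfolding w xa_def yb_def z0_def R_def by simp
    then show "w \<in> ?L" using r ya d1 d2 y by auto
  }
qed

definition Bs :: "nat \<Rightarrow> (bool \<times> int \<times> int) set" where
  "Bs n = (UNIV :: bool set) \<times> {0..<(2::int)^(n div 2)} \<times> {0..<(2::int)^((n-1) div 2)}"

lemma mod_phi_iff:
  fixes A B C M :: int
  shows "(A mod M = (B - C mod M) mod M) \<longleftrightarrow> M dvd (A - (B - C))"
  by (simp add: mod_diff_right_eq mod_eq_dvd_iff)

lemma Q_iff:
  assumes "odd (p+q)" "0 \<le> x" "x < 2^(Suc n div 2)"
  shows "Q p q n x y (fa,xa,ya) (fb,xb,yb) \<longleftrightarrow> xb = y \<and> fa = fb \<and>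
     2^(n div 2) dvd ((p+q)*xa - 2*ya - ((if fa then (p+q)*(p-q) else 0) - (p+q)*xb + 2*yb)) \<and>
     (if even n then 2^(Suc n div 2) dvd ((p+q)*x - (xa+xb))
      else 2^(Suc n div 2) dvd ((p+q)^2*x - (2*((p+q)*xa - ya + ((p+q)*xb - yb))
              - (if fa then (p+q)*(p-q) else 0))))"
proof -
  have a: "(((p+q)*xa - 2*ya) mod 2^(n div 2) = ((if fb then (p+q)*(p-q) else 0) - ((p+q)*xb - 2*yb) mod 2^(n div 2)) mod 2^(n div 2))
     \<longleftrightarrow> 2^(n div 2) dvd ((p+q)*xa - 2*ya - ((if fb then (p+q)*(p-q) else 0) - (p+q)*xb + 2*yb))"
    unfolding mod_phi_iff by (simp add: algebra_simps)
  have b: "divm (2^(Suc n div 2)) (p+q) (xa+xb) = x \<longleftrightarrow> 2^(Suc n div 2) dvd ((p+q)*x - (xa+xb))"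
    by (rule divm_eq_iff[OF assms])
  have c: "divm (2^(Suc n div 2)) ((p+q)^2) (2*((p+q)*xa - ya + ((p+q)*xb - yb)) - (if fa then (p+q)*(p-q) else 0)) = x
     \<longleftrightarrow> 2^(Suc n div 2) dvd ((p+q)^2*x - (2*((p+q)*xa - ya + ((p+q)*xb - yb)) - (if fa then (p+q)*(p-q) else 0)))"
    by (rule divm_eq_iff[OF odd_sq[OF assms(1)] assms(2,3)])
  have q: "Q p q n x y (fa,xa,ya) (fb,xb,yb) \<longleftrightarrow> xb = y \<and> fa = fb \<and>
      (((p+q)*xa - 2*ya) mod 2^(n div 2) = ((if fb then (p+q)*(p-q) else 0) - ((p+q)*xb - 2*yb) mod 2^(n div 2)) mod 2^(n div 2))
      \<and> Psi p q n (fa,xa,ya) (fb,xb,yb) = x"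
      unfolding Q_def Dl_def Phi_def by (simp only: prod.inject fst_conv snd_conv) blast
    have ps: "Psi p q n (fa,xa,ya) (fb,xb,yb) = (if even n then divm (2^(Suc n div 2)) (p+q) (xa+xb)
     else divm (2^(Suc n div 2)) ((p+q)^2) (2*((p+q)*xa - ya + ((p+q)*xb - yb)) - (if fa then (p+q)*(p-q) else 0)))"
      unfolding Psi_def by (simp only: fst_conv snd_conv)
  show ?thesis
  proof (cases "even n")
    case True
    show ?thesis unfolding q ps a by (simp only: True if_True b) (cases fa; cases fb; simp)
  next
    case False
    show ?thesis unfolding q ps a by (simp only: False if_False c) (cases fa; cases fb; simp)
  qed
qed

lemma card_int_range: "card {0..<(2::int)^k} = 2^k"
  by (simp add: nat_power_eq)

lemma count_even_card:
  fixes s \<sigma> x y K :: int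
  assumes s: "odd s" and sg: "odd \<sigma>" and K: "K > 0" and x: "0 \<le> x" "x < 2*K"
    and y: "0 \<le> y" "y < 2*K"
  shows "card {((fa,xa,ya),(fb,xb,yb)). 0 \<le> xa \<and> xa < 2*K \<and> 0 \<le> ya \<and> ya < K \<and> 0 \<le> xb \<and> xb < 2*K
      \<and> 0 \<le> yb \<and> yb < K \<and> xb = y \<and> fa = fb
      \<and> (2*K) dvd (s*xa - 2*ya - ((if fa then \<sigma> else 0) - s*xb + 2*yb))
      \<and> (2*K) dvd (s*x - (xa + xb))} = nat K"
  unfolding count_even[OF assms]
  by (subst card_image) (auto simp: inj_on_def)

lemma count_odd_card:
  fixes s \<sigma> x y M i :: int
  assumes s: "odd s" and sg: "odd \<sigma>" and M: "M > 0" "even M" and x: "0 \<le> x" "x < 2*M"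
    and y: "0 \<le> y" "y < M" and inv: "M dvd (s*i - 1)"
  shows "card {((fa,xa,ya),(fb,xb,yb)). 0 \<le> xa \<and> xa < M \<and> 0 \<le> ya \<and> ya < M \<and> 0 \<le> xb \<and> xb < M
      \<and> 0 \<le> yb \<and> yb < M \<and> xb = y \<and> fa = fb
      \<and> M dvd (s*xa - 2*ya - ((if fa then \<sigma> else 0) - s*xb + 2*yb))
      \<and> (2*M) dvd (s^2*x - (2*(s*xa - ya + (s*xb - yb)) - (if fa then \<sigma> else 0)))} = nat M"
  unfolding count_odd[OF assms]
  by (subst card_image) (auto simp: inj_on_def)

lemma count_Q:
  assumes sq: "odd (p+q)" and n: "n \<ge> 2" and x: "0 \<le> x" "x < 2^(Suc n div 2)"
    and y: "0 \<le> y" "y < 2^(n div 2)"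
  shows "card {(u,v) \<in> Bs n \<times> Bs n. Q p q n x y u v} = 2^((n+1) div 2 - 1)"
proof (cases "even n")
  case True
  define K :: int where "K = 2^((n-1) div 2)"
  have nd: "n div 2 = Suc ((n-1) div 2)" "Suc n div 2 = Suc ((n-1) div 2)" using True n by presburger+
  have K2: "(2::int)^(n div 2) = 2*K" "(2::int)^(Suc n div 2) = 2*K" "(2::int)^((n-1) div 2) = K"
    unfolding K_def nd by simp_all
  have K0: "K > 0" unfolding K_def by simp
  have sg: "odd ((p+q)*(p-q))" using sq by auto
  have "{(u,v) \<in> Bs n \<times> Bs n. Q p q n x y u v} =
     {((fa,xa,ya),(fb,xb,yb)). 0 \<le> xa \<and> xa < 2*K \<and> 0 \<le> ya \<and> ya < K \<and> 0 \<le> xb \<and> xb < 2*K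
      \<and> 0 \<le> yb \<and> yb < K \<and> xb = y \<and> fa = fb
      \<and> (2*K) dvd ((p+q)*xa - 2*ya - ((if fa then (p+q)*(p-q) else 0) - (p+q)*xb + 2*yb))
      \<and> (2*K) dvd ((p+q)*x - (xa + xb))}"
  proof (rule set_eqI)
    fix w :: "(bool \<times> int \<times> int) \<times> bool \<times> int \<times> int"
    obtain fa xa ya fb xb yb where w: "w = ((fa,xa,ya),(fb,xb,yb))" by (cases w) auto
    show "w \<in> {(u,v) \<in> Bs n \<times> Bs n. Q p q n x y u v} \<longleftrightarrow> w \<in> {((fa,xa,ya),(fb,xb,yb)). 0 \<le> xa \<and> xa < 2*K \<and> 0 \<le> ya \<and> ya < K \<and> 0 \<le> xb \<and> xb < 2*K
      \<and> 0 \<le> yb \<and> yb < K \<and> xb = y \<and> fa = fb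
      \<and> (2*K) dvd ((p+q)*xa - 2*ya - ((if fa then (p+q)*(p-q) else 0) - (p+q)*xb + 2*yb))
      \<and> (2*K) dvd ((p+q)*x - (xa + xb))}"
      unfolding w Bs_def mem_Collect_eq case_prod_conv mem_Sigma_iff atLeastLessThan_iff
        Q_iff[OF sq x] K2 using True by auto
  qed
  also have "card \<dots> = nat K"
    by (rule count_even_card[OF sq sg K0]) (use x y K2 in auto)
  also have "nat K = 2^((n+1) div 2 - 1)" unfolding K_def using True n
    by (simp add: nat_power_eq; presburger)
  finally show ?thesis .
next
  case False
  define M :: int where "M = 2^(n div 2)"
  have nd: "(n-1) div 2 = n div 2" "Suc n div 2 = Suc (n div 2)" using False n by presburger+
  have M2: "(2::int)^(n div 2) = M" "(2::int)^(Suc n div 2) = 2*M" "(2::int)^((n-1) div 2) = M"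
    unfolding M_def nd by simp_all
  have M0: "M > 0" "even M" unfolding M_def using n by auto
  have sg: "odd ((p+q)*(p-q))" using sq by auto
  have cp: "coprime (p+q) M" unfolding M_def using sq by simp
  obtain i where "[(p+q) * i = 1] (mod M)" using cong_solve_coprime_int[OF cp] by blast
  then have inv: "M dvd ((p+q)*i - 1)" by (simp add: cong_iff_dvd_diff)
  have "{(u,v) \<in> Bs n \<times> Bs n. Q p q n x y u v} =
     {((fa,xa,ya),(fb,xb,yb)). 0 \<le> xa \<and> xa < M \<and> 0 \<le> ya \<and> ya < M \<and> 0 \<le> xb \<and> xb < M
      \<and> 0 \<le> yb \<and> yb < M \<and> xb = y \<and> fa = fb
      \<and> M dvd ((p+q)*xa - 2*ya - ((if fa then (p+q)*(p-q) else 0) - (p+q)*xb + 2*yb))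
      \<and> (2*M) dvd ((p+q)^2*x - (2*((p+q)*xa - ya + ((p+q)*xb - yb)) - (if fa then (p+q)*(p-q) else 0)))}"
  proof (rule set_eqI)
    fix w :: "(bool \<times> int \<times> int) \<times> bool \<times> int \<times> int"
    obtain fa xa ya fb xb yb where w: "w = ((fa,xa,ya),(fb,xb,yb))" by (cases w) auto
    show "w \<in> {(u,v) \<in> Bs n \<times> Bs n. Q p q n x y u v} \<longleftrightarrow> w \<in> {((fa,xa,ya),(fb,xb,yb)). 0 \<le> xa \<and> xa < M \<and> 0 \<le> ya \<and> ya < M \<and> 0 \<le> xb \<and> xb < M
      \<and> 0 \<le> yb \<and> yb < M \<and> xb = y \<and> fa = fb
      \<and> M dvd ((p+q)*xa - 2*ya - ((if fa then (p+q)*(p-q) else 0) - (p+q)*xb + 2*yb))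
      \<and> (2*M) dvd ((p+q)^2*x - (2*((p+q)*xa - ya + ((p+q)*xb - yb)) - (if fa then (p+q)*(p-q) else 0)))}"
      unfolding w Bs_def mem_Collect_eq case_prod_conv mem_Sigma_iff atLeastLessThan_iff
        Q_iff[OF sq x] M2 using False by auto
  qed
  also have "card \<dots> = nat M"
    by (rule count_odd_card[OF sq sg M0 _ _ _ _ inv]) (use x y M2 in auto)
  also have "nat M = 2^((n+1) div 2 - 1)" unfolding M_def using False n
    by (simp add: nat_power_eq; presburger)
  finally show ?thesis .
qed

fun ex :: "nat \<Rightarrow> nat" where
  "ex 0 = 0"
| "ex (Suc n) = (if n < 2 then 0 else 2 * ex n + (n + 1) div 2 - 1)"

lemma Tm_range: "odd (p+q) \<Longrightarrow> Tm p q n ` A \<subseteq> Bs n"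
  using psi_range by (auto simp: Tm_def Bs_def)

lemma Bs_finite: "finite (Bs n)" by (simp add: Bs_def)

lemma Bs_card: "n \<ge> 1 \<Longrightarrow> card (Bs n) = 2^n"
proof -
  assume n: "n \<ge> 1"
  have "card (Bs n) = 2 * (2^(n div 2) * 2^((n-1) div 2))"
    by (simp add: Bs_def card_cartesian_product nat_power_eq)
  also have "\<dots> = 2^(Suc (n div 2 + (n-1) div 2))" by (simp add: power_add)
  also have "Suc (n div 2 + (n-1) div 2) = n" using n by presburger
  finally show ?thesis .
qed

lemma fiber_base:
  assumes "t \<in> Bs 2"
  shows "card {g \<in> J p q 2. Tm p q 2 g = t} = 1"
proof -
  obtain f x y where t: "t = (f,x,y)" by (cases t) auto
  have xy: "x = 0 \<or> x = 1" "y = 0" using assms unfolding t Bs_def by auto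
  have "{g \<in> J p q 2. Tm p q 2 g = t} = {Nd f (Nd (x = 1) Lf Lf) (Nd (x = 1) Lf Lf)}"
    using xy unfolding t
    by (auto simp: Tm_def numeral_2_eq_2 numeral_3_eq_3)
  then show ?thesis by simp
qed

lemma fiber_main:
  assumes sq: "odd (p+q)" and n: "n \<ge> 2"
  shows "\<forall>t\<in>Bs n. card {g \<in> J p q n. Tm p q n g = t} = 2^(ex n)"
  using n
proof (induction n rule: nat_induct_at_least)
  case base
  then show ?case using fiber_base by (simp add: numeral_2_eq_2)
next
  case (Suc n)
  show ?case
  proof
    fix t assume t: "t \<in> Bs (Suc n)"
    obtain f x y where tt: "t = (f,x,y)" by (cases t) auto
    have x: "0 \<le> x" "x < 2^(Suc n div 2)" and y: "0 \<le> y" "y < 2^(n div 2)"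
      using t unfolding tt Bs_def by auto
    have "card {g \<in> J p q (Suc n). Tm p q (Suc n) g = t}
        = card {(a,b) \<in> J p q n \<times> J p q n. Q p q n x y (Tm p q n a) (Tm p q n b)}"
      unfolding tt by (rule card_fiber_Suc[OF sq Suc.hyps])
    also have "\<dots> = 2^(ex n) * 2^(ex n) * card {(u,v) \<in> Bs n \<times> Bs n. Q p q n x y u v}"
      by (rule card_pairs[OF J_finite Bs_finite Tm_range[OF sq]]) (use Suc.IH in auto)
    also have "\<dots> = 2^(ex n) * 2^(ex n) * 2^((n+1) div 2 - 1)"
      using count_Q[OF sq Suc.hyps x y] by simp
    also have "\<dots> = 2^(ex (Suc n))"
      using Suc.hyps by (simp add: power_add[symmetric] mult_2)
    finally show "card {g \<in> J p q (Suc n). Tm p q (Suc n) g = t} = 2^(ex (Suc n))" .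
  qed
qed

lemma card_J_main:
  assumes sq: "odd (p+q)" and n: "n \<ge> 2"
  shows "card (J p q n) = 2^(n + ex n)"
proof -
  have "card (J p q n) = 2^(ex n) * card (Bs n)"
    by (rule card_total[OF J_finite Bs_finite Tm_range[OF sq]]) (use fiber_main[OF sq n] in auto)
  then show ?thesis using Bs_card[of n] n by (simp add: power_add)
qed

lemma ex_closed:
  assumes "n \<ge> 2"
  shows "6 * (n + ex n) = 2^n + 3*n + (if odd n then 1 else 2)"
  using assms
proof (induction n rule: nat_induct_at_least)
  case base
  then show ?case by (simp add: numeral_2_eq_2)
next
  case (Suc n)
  have h: "(n + 1) div 2 \<ge> 1" using Suc.hyps by presburger
  have "6 * (Suc n + ex (Suc n)) = 6 * Suc n + 12 * ex n + 6 * ((n + 1) div 2) - 6"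
    using Suc.hyps h by simp
  also have "\<dots> = 2 * (6 * (n + ex n)) - 6 * n + 6 * ((n + 1) div 2)" by simp
  also have "\<dots> = 2 * (2^n + 3*n + (if odd n then 1 else 2)) - 6 * n + 6 * ((n + 1) div 2)"
    using Suc.IH by simp
  also have "\<dots> = 2^(Suc n) + 3 * Suc n + (if odd (Suc n) then 1 else 2)"
    by (cases "odd n") (simp_all, presburger+)
  finally show ?case .
qed

lemma card_autT2: "card (autT 2) = 2"
proof -
  have "autT 2 = {Nd True Lf Lf, Nd False Lf Lf}" by (auto simp: numeral_2_eq_2)
  then show ?thesis by simp
qed

theorem corollary2:
  fixes p q :: int and n :: nat
  assumes "p > 0" and "q > 0" and "odd (p + q)" and "n \<ge> 1"
  shows "card (J p q n) = 2 ^ nat (ceiling ((2 ^ n + 3 * real n) / 6))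
       \<and> card (J p q n) = 2 ^ (if odd n then (2 ^ n + 3 * n + 1) div 6
                                       else (2 ^ n + 3 * n + 2) div 6)"
proof -
  obtain G where G: "card (J p q n) = 2^G" "6 * G = 2^n + 3*n + (if odd n then 1 else 2)"
  proof (cases "n = 1")
    case True
    then show ?thesis using that[of 1] card_autT2 by simp
  next
    case False
    then have "n \<ge> 2" using assms(4) by simp
    then show ?thesis using that[of "n + ex n"] card_J_main[OF assms(3)] ex_closed by blast
  qed
  have d: "(if odd n then (2 ^ n + 3 * n + 1) div 6 else (2 ^ n + 3 * n + 2) div 6) = G"
  proof (cases "odd n")
    case True
    then have "2 ^ n + 3 * n + 1 = 6 * G" using G(2) by simp
    then show ?thesis using True by simp
  next
    case False
    then have "2 ^ n + 3 * n + 2 = 6 * G" using G(2) by simp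
    then show ?thesis using False by simp
  qed
  have r: "6 * real G = 2^n + 3 * real n + (if odd n then 1 else 2)"
    using arg_cong[OF G(2), of real] by simp
  have c: "ceiling ((2 ^ n + 3 * real n) / 6) = int G"
    by (rule ceiling_unique) (use r in \<open>auto split: if_splits\<close>)
  show ?thesis unfolding d c using G(1) by simp
qed

end
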